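(* Let $f:\mathcal X\to\mathbb R$ be bounded and measurable, let $N\ge1$ be an integer, and for each $\beta\in[0,1]$ let $\tilde P_{\beta f}$ be a probability distribution on $\mathcal X$ (produced by some sampling algorithm). Consider the estimator: sample $\beta_1,\dots,\beta_N\sim\mathcal U([0,1])$ independently, draw $X_i\sim\tilde P_{\beta_i f}$ independently, and output $\tilde L_f=\frac1N\sum_{i=1}^Nf(X_i)$. Then for $\delta>0$, with probability at least $1-\delta$, \[|\tilde L_f-L_f|\le|L_f-\mathbb E\tilde L_f|+2\|f\|_\infty\sqrt{\frac{\log(2/\delta)}{2N}},\] where $|L_f-\mathbb E\tilde L_f|\le2\|f\|_\infty\sup_{\beta\in[0,1]}D_{\mathrm{TV}}(P_{\beta f},\tilde P_{\beta f})$ and, if $f$ is Lipschitz, $|L_f-\mathbb E\tilde L_f|\le|f|_1\sup_{\beta\in[0,1]}W_1(P_{\beta f},\tilde P_{\beta f})$.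
   Context: $\mathcal X=[0,1]^d$ with Lebesgue measure. For bounded measurable $h$: $Z_h=\int_{\mathcal X}e^h dx$, $L_h=\log Z_h$, $P_h$ the distribution with density $e^h/Z_h$. $|f|_1$ is the minimal Lipschitz constant of $f$ with respect to the Euclidean norm. $D_{\mathrm{TV}}(P,Q)=\sup_A|P(A)-Q(A)|$, $W_1(P,Q)=\inf_{X\sim P,Y\sim Q}\mathbb E\|X-Y\|_2$. $\|f\|_\infty$ is the essential supremum of $|f|$.
   Formalization: $\|f\|_\infty$ is the supremum of |f| over $\mathcal X$ rather than its essential supremum, and $\beta\mapsto\tilde P_{\beta f}$ is also assumed measurable from [0,1] into probability distributions on $\mathcal X$. The statement above fails without it. *)

theory Defs
  imports "HOL-Probability.Probability"
begin

definition cubeX :: "'a::euclidean_space set" where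
  "cubeX = cbox 0 One"

definition MX :: "'a::euclidean_space measure" where
  "MX = restrict_space lborel cubeX"

definition Zh :: "('a::euclidean_space \<Rightarrow> real) \<Rightarrow> real" where
  "Zh h = integral\<^sup>L MX (\<lambda>x. exp (h x))"

definition Lh :: "('a::euclidean_space \<Rightarrow> real) \<Rightarrow> real" where
  "Lh h = ln (Zh h)"

definition Ph :: "('a::euclidean_space \<Rightarrow> real) \<Rightarrow> 'a measure" where
  "Ph h = density MX (\<lambda>x. ennreal (exp (h x) / Zh h))"

definition supnorm :: "('a::euclidean_space \<Rightarrow> real) \<Rightarrow> real" where
  "supnorm f = (SUP x\<in>cubeX. \<bar>f x\<bar>)"

definition lipconst :: "('a::euclidean_space \<Rightarrow> real) \<Rightarrow> real" where
  "lipconst f = Inf {C. lipschitz_on C cubeX f}"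

definition dTV :: "'b measure \<Rightarrow> 'b measure \<Rightarrow> real" where
  "dTV P Q = Sup {\<bar>measure P A - measure Q A\<bar> | A. A \<in> sets P}"

definition couplings :: "'b measure \<Rightarrow> 'b measure \<Rightarrow> 'b measure \<Rightarrow> ('b \<times> 'b) measure set" where
  "couplings M P Q = {\<pi>. sets \<pi> = sets (M \<Otimes>\<^sub>M M) \<and> prob_space \<pi> \<and>
      distr \<pi> M fst = P \<and> distr \<pi> M snd = Q}"

definition W1 :: "'b::metric_space measure \<Rightarrow> 'b measure \<Rightarrow> 'b measure \<Rightarrow> real" where
  "W1 M P Q = Inf {integral\<^sup>L \<pi> (\<lambda>z. dist (fst z) (snd z)) | \<pi>. \<pi> \<in> couplings M P Q}"

definition U01 :: "real measure" where
  "U01 = restrict_space lborel {0..1}"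

definition pairlaw :: "(real \<Rightarrow> 'a::euclidean_space measure) \<Rightarrow> (real \<times> 'a) measure" where
  "pairlaw Pt = U01 \<bind> (\<lambda>b. Pt b \<bind> (\<lambda>x. return (U01 \<Otimes>\<^sub>M MX) (b, x)))"

definition sampleN :: "nat \<Rightarrow> (real \<Rightarrow> 'a::euclidean_space measure) \<Rightarrow> (nat \<Rightarrow> real \<times> 'a) measure" where
  "sampleN N Pt = PiM {..<N} (\<lambda>_. pairlaw Pt)"

definition Lest :: "nat \<Rightarrow> ('a \<Rightarrow> real) \<Rightarrow> (nat \<Rightarrow> real \<times> 'a) \<Rightarrow> real" where
  "Lest N f \<omega> = (\<Sum>i<N. f (snd (\<omega> i))) / real N"

end

theory Submission
  imports Defs
begin


lemma space_MX: "space MX = cubeX"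
  by (simp add: MX_def space_restrict_space)

lemma sets_MX: "sets MX = sets (restrict_space lborel cubeX)"
  by (simp add: MX_def)

lemma prob_MX: "prob_space (MX :: 'a::euclidean_space measure)"
proof
  have "emeasure lborel (cubeX::'a set) = 1"
    by (simp add: cubeX_def emeasure_lborel_cbox_eq inner_Basis)
  then show "emeasure MX (space MX) = 1"
    by (simp add: space_MX MX_def emeasure_restrict_space cubeX_def)
qed

lemma space_U01: "space U01 = {0..1}"
  by (simp add: U01_def space_restrict_space)

lemma prob_U01: "prob_space U01"
proof
  show "emeasure U01 (space U01) = 1"
    by (simp add: space_U01 U01_def emeasure_restrict_space)
qed


lemma exp_taylor_bound:
  fixes b h t S :: real
  assumes "h \<noteq> 0" "\<bar>h\<bar> \<le> 1" "\<bar>t\<bar> \<le> S"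
  shows "\<bar>(exp ((b + h) * t) - exp (b * t)) / h - t * exp (b * t)\<bar> \<le> exp (\<bar>b\<bar> * S) * exp S * S\<^sup>2 * \<bar>h\<bar>"
proof -
  obtain s where s: "\<bar>s\<bar> \<le> \<bar>h * t\<bar>" "exp (h * t) = (\<Sum>m<2. (h*t) ^ m / fact m) + exp s / fact 2 * (h*t) ^ 2"
    using Maclaurin_exp_le[of "h*t" 2] by blast
  have e: "exp (h * t) = 1 + h * t + exp s / 2 * (h*t)^2"
    using s(2) by (simp add: numeral_2_eq_2)
  have "(exp ((b + h) * t) - exp (b * t)) / h - t * exp (b * t) = exp (b*t) * (exp (h*t) - 1 - h*t) / h"
    using assms(1) by (simp add: distrib_right exp_add field_simps)
  also have "\<dots> = exp (b*t) * exp s / 2 * h * t^2"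
    using assms(1) by (simp add: e power2_eq_square field_simps)
  finally have eq: "(exp ((b + h) * t) - exp (b * t)) / h - t * exp (b * t) = exp (b*t) * exp s / 2 * h * t^2" .
  have S0: "0 \<le> S" using assms(3) by linarith
  have ht: "\<bar>h * t\<bar> \<le> S"
    using assms by (simp add: abs_mult) (metis abs_ge_zero mult_le_one mult_mono' mult.commute mult_1 order_trans)
  have b1: "exp (b*t) \<le> exp (\<bar>b\<bar> * S)"
  proof -
    have "b * t \<le> \<bar>b\<bar> * \<bar>t\<bar>" by (metis abs_ge_self abs_mult)
    also have "\<dots> \<le> \<bar>b\<bar> * S" using assms(3) by (intro mult_left_mono) auto
    finally show ?thesis by simp
  qed
  have b2: "exp s \<le> exp S" using s(1) ht by simp
  have b3: "t^2 \<le> S^2" using assms(3) by (metis abs_le_square_iff S0 abs_of_nonneg power2_abs abs_ge_zero power_mono)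
  have "\<bar>exp (b*t) * exp s / 2 * h * t^2\<bar> = exp (b*t) * exp s / 2 * \<bar>h\<bar> * t^2"
    by (simp add: abs_mult)
  also have "\<dots> \<le> exp (\<bar>b\<bar> * S) * exp S * S\<^sup>2 * \<bar>h\<bar>"
  proof -
    have "exp (b*t) * exp s \<le> exp (\<bar>b\<bar> * S) * exp S" by (intro mult_mono b1 b2) auto
    moreover have "0 \<le> exp (b*t) * exp s" by simp
    ultimately have "exp (b*t) * exp s / 2 \<le> exp (\<bar>b\<bar> * S) * exp S" by linarith
    then have "exp (b*t) * exp s / 2 * t^2 \<le> exp (\<bar>b\<bar> * S) * exp S * S^2" by (intro mult_mono b3) auto
    then have "exp (b*t) * exp s / 2 * t^2 * \<bar>h\<bar> \<le> exp (\<bar>b\<bar> * S) * exp S * S^2 * \<bar>h\<bar>"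
      by (intro mult_right_mono) auto
    then show ?thesis by (simp add: mult_ac)
  qed
  finally show ?thesis unfolding eq .
qed

lemma deriv_exp_integral:
  fixes M :: "'a measure" and f g :: "'a \<Rightarrow> real"
  assumes P: "prob_space M" and fm[measurable]: "f \<in> borel_measurable M" and gm[measurable]: "g \<in> borel_measurable M"
    and fb: "\<And>x. x \<in> space M \<Longrightarrow> \<bar>f x\<bar> \<le> S" and gb: "\<And>x. x \<in> space M \<Longrightarrow> \<bar>g x\<bar> \<le> G"
  shows "((\<lambda>c. \<integral>x. g x * exp (c * f x) \<partial>M) has_real_derivative (\<integral>x. g x * (f x * exp (b * f x)) \<partial>M)) (at b)"
proof -
  interpret prob_space M by (rule P)
  have S0: "0 \<le> S" using fb[of "SOME x. x \<in> space M"] not_empty some_in_eq by fastforce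
  have G0: "0 \<le> G" using gb[of "SOME x. x \<in> space M"] not_empty some_in_eq by fastforce
  have expb: "\<And>c x. x \<in> space M \<Longrightarrow> exp (c * f x) \<le> exp (\<bar>c\<bar> * S)"
  proof -
    fix c x assume x: "x \<in> space M"
    have "c * f x \<le> \<bar>c\<bar> * \<bar>f x\<bar>" by (metis abs_ge_self abs_mult)
    also have "\<dots> \<le> \<bar>c\<bar> * S" using fb[OF x] by (intro mult_left_mono) auto
    finally show "exp (c * f x) \<le> exp (\<bar>c\<bar> * S)" by simp
  qed
  have int1: "integrable M (\<lambda>x. g x * exp (c * f x))" for c
  proof (rule integrable_const_bound[where B="G * exp (\<bar>c\<bar> * S)"])
    show "AE x in M. norm (g x * exp (c * f x)) \<le> G * exp (\<bar>c\<bar> * S)"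
      by (intro AE_I2) (auto simp: abs_mult G0 intro!: mult_mono gb expb)
  qed simp
  have int2: "integrable M (\<lambda>x. g x * (f x * exp (c * f x)))" for c
  proof (rule integrable_const_bound[where B="G * (S * exp (\<bar>c\<bar> * S))"])
    show "AE x in M. norm (g x * (f x * exp (c * f x))) \<le> G * (S * exp (\<bar>c\<bar> * S))"
      by (intro AE_I2) (auto simp: abs_mult G0 S0 intro!: mult_mono gb expb fb)
  qed simp
  define K where "K = G * (exp (\<bar>b\<bar> * S) * exp S * S\<^sup>2)"
  define Z where "Z = (\<lambda>c. \<integral>x. g x * exp (c * f x) \<partial>M)"
  define D where "D = (\<integral>x. g x * (f x * exp (b * f x)) \<partial>M)"
  have "((\<lambda>h. (Z (b + h) - Z b) / h - D) \<longlongrightarrow> 0) (at 0)"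
  proof (rule Lim_null_comparison)
    show "((\<lambda>h. K * \<bar>h\<bar>) \<longlongrightarrow> 0) (at 0)"
      by (rule tendsto_eq_intros refl | simp)+
    
    have "\<forall>h. h \<noteq> 0 \<and> dist h 0 < 1 \<longrightarrow> norm ((Z (b + h) - Z b) / h - D) \<le> K * \<bar>h\<bar>"
    proof (intro allI impI)
      fix h :: real assume h: "h \<noteq> 0 \<and> dist h 0 < 1"
      have eq: "(Z (b + h) - Z b) / h - D = (\<integral>x. g x * ((exp ((b + h) * f x) - exp (b * f x)) / h - f x * exp (b * f x)) \<partial>M)"
      proof -
        have "(Z (b + h) - Z b) / h - D = (\<integral>x. (g x * exp ((b+h) * f x) - g x * exp (b * f x)) / h - g x * (f x * exp (b * f x)) \<partial>M)"
        proof -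
          have i: "integrable M (\<lambda>x. (g x * exp ((b+h) * f x) - g x * exp (b * f x)) / h)"
            by (rule integrable_divide_zero, rule Bochner_Integration.integrable_diff[OF int1 int1])
          show ?thesis unfolding Z_def D_def
            by (simp only: Bochner_Integration.integral_diff[OF i int2] integral_divide_zero Bochner_Integration.integral_diff[OF int1 int1])
        qed
        also have "\<dots> = (\<integral>x. g x * ((exp ((b + h) * f x) - exp (b * f x)) / h - f x * exp (b * f x)) \<partial>M)"
          by (intro Bochner_Integration.integral_cong refl) (simp add: right_diff_distrib diff_divide_distrib)
        finally show ?thesis .
      qed
      have bnd: "\<bar>g x * ((exp ((b + h) * f x) - exp (b * f x)) / h - f x * exp (b * f x))\<bar> \<le> K * \<bar>h\<bar>"
        if x: "x \<in> space M" for x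
      proof -
        have "\<bar>g x * ((exp ((b + h) * f x) - exp (b * f x)) / h - f x * exp (b * f x))\<bar>
            = \<bar>g x\<bar> * \<bar>(exp ((b + h) * f x) - exp (b * f x)) / h - f x * exp (b * f x)\<bar>"
          by (simp add: abs_mult)
        also have "\<dots> \<le> G * (exp (\<bar>b\<bar> * S) * exp S * S\<^sup>2 * \<bar>h\<bar>)"
        proof -
          have t1: "\<bar>(exp ((b + h) * f x) - exp (b * f x)) / h - f x * exp (b * f x)\<bar> \<le> exp (\<bar>b\<bar> * S) * exp S * S\<^sup>2 * \<bar>h\<bar>"
            by (rule exp_taylor_bound) (use h fb[OF x] in auto)
          show ?thesis by (rule mult_mono[OF gb[OF x] t1 G0 abs_ge_zero])
        qed
        finally show ?thesis by (simp add: K_def mult_ac)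
      qed
      have "norm ((Z (b + h) - Z b) / h - D) \<le> (\<integral>x. \<bar>g x * ((exp ((b + h) * f x) - exp (b * f x)) / h - f x * exp (b * f x))\<bar> \<partial>M)"
        unfolding eq using integral_norm_bound[of M "\<lambda>x. g x * ((exp ((b + h) * f x) - exp (b * f x)) / h - f x * exp (b * f x))"] by (simp only: real_norm_def)
      also have "\<dots> \<le> (\<integral>x. K * \<bar>h\<bar> \<partial>M)"
      proof (intro integral_mono integrable_abs bnd)
        show "integrable M (\<lambda>x. g x * ((exp ((b + h) * f x) - exp (b * f x)) / h - f x * exp (b * f x)))"
          by (rule integrable_const_bound[where B="K * \<bar>h\<bar>"]) (simp_all add: AE_I2 bnd)
      qed auto
      also have "\<dots> = K * \<bar>h\<bar>" by (simp add: prob_space)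
      finally show "norm ((Z (b + h) - Z b) / h - D) \<le> K * \<bar>h\<bar>" .
    qed
    then show "\<forall>\<^sub>F h in at 0. norm ((Z (b + h) - Z b) / h - D) \<le> K * \<bar>h\<bar>"
      unfolding eventually_at by (intro exI[of _ 1]) auto
  qed
  then have "((\<lambda>h. (Z (b + h) - Z b) / h) \<longlongrightarrow> D) (at 0)"
    by (rule LIM_zero_cancel)
  then show ?thesis unfolding DERIV_def Z_def D_def .
qed


locale fctx =
  fixes f :: "'a::euclidean_space \<Rightarrow> real" and S :: real
  assumes fm[measurable]: "f \<in> borel_measurable MX"
    and fb: "\<And>x. x \<in> cubeX \<Longrightarrow> \<bar>f x\<bar> \<le> S"
begin

definition Z :: "real \<Rightarrow> real" where "Z c = (\<integral>x. exp (c * f x) \<partial>MX)"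
definition Z1 :: "real \<Rightarrow> real" where "Z1 c = (\<integral>x. f x * exp (c * f x) \<partial>MX)"

lemma fb': "x \<in> space MX \<Longrightarrow> \<bar>f x\<bar> \<le> S" using fb by (simp add: space_MX)

lemma Z_deriv: "(Z has_real_derivative Z1 c) (at c)"
proof -
  have "((\<lambda>c. \<integral>x. 1 * exp (c * f x) \<partial>MX) has_real_derivative (\<integral>x. 1 * (f x * exp (c * f x)) \<partial>MX)) (at c)"
    by (rule deriv_exp_integral[OF prob_MX fm _ fb', where G=1]) auto
  then show ?thesis by (simp add: Z_def[abs_def] Z1_def)
qed

lemma Z1_deriv: "\<exists>D. (Z1 has_real_derivative D) (at c)"
proof -
  have "((\<lambda>c. \<integral>x. f x * exp (c * f x) \<partial>MX) has_real_derivative (\<integral>x. f x * (f x * exp (c * f x)) \<partial>MX)) (at c)"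
    by (rule deriv_exp_integral[OF prob_MX fm fm fb' fb'])
  then show ?thesis unfolding Z1_def[abs_def] by blast
qed

lemma Z_cont: "continuous_on A Z"
  using Z_deriv DERIV_isCont continuous_at_imp_continuous_on by blast

lemma Z1_cont: "continuous_on A Z1"
  using Z1_deriv DERIV_isCont continuous_at_imp_continuous_on by blast

lemma Z_pos: "Z c > 0"
proof -
  interpret prob_space MX by (rule prob_MX)
  have S0: "0 \<le> S" using fb'[of "SOME x. x \<in> space MX"] not_empty some_in_eq by fastforce
  have lb: "exp (- (\<bar>c\<bar> * S)) \<le> exp (c * f x)" if x: "x \<in> space MX" for x
  proof -
    have "\<bar>c * f x\<bar> \<le> \<bar>c\<bar> * S" using fb'[OF x] by (simp add: abs_mult mult_left_mono)
    then show ?thesis by simp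
  qed
  have "(\<integral>x. exp (- (\<bar>c\<bar> * S)) \<partial>(MX::'a measure)) \<le> Z c"
    unfolding Z_def
  proof (rule Bochner_Integration.integral_mono)
    show "integrable MX (\<lambda>x. exp (c * f x))"
    proof (rule integrable_const_bound[where B="exp (\<bar>c\<bar> * S)"])
      show "AE x in MX. norm (exp (c * f x)) \<le> exp (\<bar>c\<bar> * S)"
      proof (rule AE_I2)
        fix x :: 'a assume x: "x \<in> space MX"
        have "\<bar>c * f x\<bar> \<le> \<bar>c\<bar> * S" using fb'[OF x] by (simp add: abs_mult mult_left_mono)
        then show "norm (exp (c * f x)) \<le> exp (\<bar>c\<bar> * S)" by simp
      qed
    qed simp
  qed (use lb in auto)
  moreover have "(\<integral>x. exp (- (\<bar>c\<bar> * S)) \<partial>(MX::'a measure)) > 0" by (simp add: prob_space)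
  ultimately show ?thesis by linarith
qed

lemma Z0: "Z 0 = 1"
proof -
  interpret prob_space MX by (rule prob_MX)
  show ?thesis by (simp add: Z_def prob_space)
qed

lemma mean_Ph: "(\<integral>x. f x \<partial>Ph (\<lambda>x. c * f x)) = Z1 c / Z c"
proof -
  have "Zh (\<lambda>x. c * f x) = Z c" by (simp add: Zh_def Z_def)
  then have "(\<integral>x. f x \<partial>Ph (\<lambda>x. c * f x)) = (\<integral>x. (exp (c * f x) / Z c) *\<^sub>R f x \<partial>MX)"
    unfolding Ph_def using Z_pos[of c]
    by (subst integral_density) auto
  also have "\<dots> = (\<integral>x. f x * exp (c * f x) \<partial>MX) / Z c"
    by (simp add: mult.commute)
  finally show ?thesis by (simp add: Z1_def)
qed

lemma Lh_eq: "Lh f = ln (Z 1)"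
  by (simp add: Lh_def Zh_def Z_def)

lemma thermo: "Lh f = (\<integral>\<beta>. Z1 \<beta> / Z \<beta> \<partial>U01)"
proof -
  have "integral\<^sup>L lborel (\<lambda>x. indicator {0 .. 1} x *\<^sub>R (Z1 x / Z x)) = ln (Z 1) - ln (Z 0)"
  proof (rule integral_FTC_atLeastAtMost)
    fix x :: real
    have "((\<lambda>c. ln (Z c)) has_real_derivative (1 / Z x * Z1 x)) (at x)"
      by (rule DERIV_chain2[OF DERIV_ln_divide[OF Z_pos] Z_deriv])
    then show "((\<lambda>c. ln (Z c)) has_vector_derivative Z1 x / Z x) (at x within {0..1})"
      by (simp add: has_real_derivative_iff_has_vector_derivative[symmetric] has_field_derivative_at_within)
  next
    show "continuous_on {0..1} (\<lambda>x. Z1 x / Z x)"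
      by (intro continuous_on_divide Z1_cont Z_cont) (auto simp: Z_pos[THEN less_imp_neq, symmetric] dest: sym)
  qed simp
  moreover have "(\<integral>\<beta>. Z1 \<beta> / Z \<beta> \<partial>U01) = integral\<^sup>L lborel (\<lambda>x. indicator {0 .. 1} x *\<^sub>R (Z1 x / Z x))"
    unfolding U01_def by (rule integral_restrict_space) simp
  ultimately show ?thesis by (simp add: Lh_eq Z0)
qed

lemma mean_cont: "continuous_on UNIV (\<lambda>c. Z1 c / Z c)"
  by (intro continuous_on_divide Z1_cont Z_cont) (simp add: Z_pos[THEN less_imp_neq, symmetric])

lemma mean_meas: "(\<lambda>c. Z1 c / Z c) \<in> borel_measurable U01"
  unfolding U01_def
  by (rule measurable_restrict_space1) (simp add: borel_measurable_continuous_onI[OF mean_cont])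

end


locale kctx = fctx +
  fixes Pt :: "real \<Rightarrow> 'a measure"
  assumes Pt_kernel[measurable]: "Pt \<in> measurable U01 (subprob_algebra MX)"
    and Pt_prob: "\<And>\<beta>. \<beta> \<in> {0..1} \<Longrightarrow> prob_space (Pt \<beta>)"
begin

lemma sets_Pt: "\<beta> \<in> {0..1} \<Longrightarrow> sets (Pt \<beta>) = sets MX"
  using sets_kernel[OF Pt_kernel] by (simp add: space_U01)

lemma space_Pt: "\<beta> \<in> {0..1} \<Longrightarrow> space (Pt \<beta>) = cubeX"
  using sets_eq_imp_space_eq[OF sets_Pt] by (simp add: space_MX)

definition K :: "real \<Rightarrow> (real \<times> 'a) measure" where
  "K b = Pt b \<bind> (\<lambda>x. return (U01 \<Otimes>\<^sub>M MX) (b, x))"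

lemma K_meas[measurable]: "K \<in> measurable U01 (subprob_algebra (U01 \<Otimes>\<^sub>M MX))"
  unfolding K_def[abs_def]
proof (rule measurable_bind'[OF Pt_kernel])
  have "(\<lambda>(b, x). return (U01 \<Otimes>\<^sub>M MX) (b, x)) = return (U01 \<Otimes>\<^sub>M MX)"
    by (simp add: fun_eq_iff)
  then show "(\<lambda>(b, x). return (U01 \<Otimes>\<^sub>M MX) (b, x)) \<in> U01 \<Otimes>\<^sub>M MX \<rightarrow>\<^sub>M subprob_algebra (U01 \<Otimes>\<^sub>M MX)"
    by simp
qed

lemma ret_meas: "b \<in> {0..1} \<Longrightarrow> (\<lambda>x. return (U01 \<Otimes>\<^sub>M MX) (b, x)) \<in> measurable (Pt b) (subprob_algebra (U01 \<Otimes>\<^sub>M MX))"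
  apply (subst measurable_cong_sets[OF sets_Pt refl], assumption)
  apply (rule measurable_compose[OF _ return_measurable])
  apply (auto simp: space_U01)
  done

lemma K_prob: "b \<in> {0..1} \<Longrightarrow> prob_space (K b)"
  unfolding K_def
  by (rule prob_space.prob_space_bind[OF Pt_prob _ ret_meas], assumption, rule AE_I2, rule prob_space_return)
     (auto simp: space_pair_measure space_U01 space_Pt space_MX)

lemma pairlaw_eq: "pairlaw Pt = U01 \<bind> K"
  by (simp add: pairlaw_def K_def[abs_def])

lemma sets_pairlaw: "sets (pairlaw Pt) = sets (U01 \<Otimes>\<^sub>M MX)"
  unfolding pairlaw_eq
  by (rule sets_bind) (auto simp: space_U01 sets_kernel[OF K_meas])

lemma space_pairlaw: "space (pairlaw Pt) = {0..1} \<times> cubeX"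
  using sets_eq_imp_space_eq[OF sets_pairlaw] by (simp add: space_pair_measure space_U01 space_MX)

lemma pairlaw_prob: "prob_space (pairlaw Pt)"
  unfolding pairlaw_eq
  by (rule prob_space.prob_space_bind[OF prob_U01 _ K_meas]) (auto intro!: AE_I2 K_prob simp: space_U01)

lemma zero_cube: "0 \<in> cubeX" by (auto simp: cubeX_def mem_box)

lemma S0: "0 \<le> S" using fb[OF zero_cube] by linarith

lemma fsnd_meas[measurable]: "(\<lambda>z. f (snd z)) \<in> borel_measurable (U01 \<Otimes>\<^sub>M MX)"
  by measurable

lemma int_Pt: "b \<in> {0..1} \<Longrightarrow> (\<integral>z. f (snd z) \<partial>K b) = (\<integral>x. f x \<partial>Pt b)"
proof -
  assume b: "b \<in> {0..1}"
  interpret P: prob_space "Pt b" by (rule Pt_prob[OF b])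
  have "(\<integral>z. f (snd z) \<partial>K b) = (\<integral>x. (\<integral>z. f (snd z) \<partial>return (U01 \<Otimes>\<^sub>M MX) (b, x)) \<partial>Pt b)"
    unfolding K_def
    by (rule integral_bind[OF fsnd_meas _ ret_meas[OF b], where B=S and B'=1])
       (use b space_Pt[OF b] in \<open>auto simp: space_pair_measure space_U01 space_MX fb P.finite_measure_axioms
         intro!: AE_I2 prob_space.emeasure_le_1[OF prob_space_return]\<close>)
  also have "\<dots> = (\<integral>x. f x \<partial>Pt b)"
    by (intro Bochner_Integration.integral_cong refl, subst integral_return)
       (use b space_Pt[OF b] in \<open>auto simp: space_pair_measure space_U01 space_MX\<close>)
  finally show ?thesis .
qed

lemma int_pairlaw: "(\<integral>z. f (snd z) \<partial>pairlaw Pt) = (\<integral>b. (\<integral>x. f x \<partial>Pt b) \<partial>U01)"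
proof -
  interpret U: prob_space U01 by (rule prob_U01)
  have "(\<integral>z. f (snd z) \<partial>pairlaw Pt) = (\<integral>b. (\<integral>z. f (snd z) \<partial>K b) \<partial>U01)"
    unfolding pairlaw_eq
    by (rule integral_bind[OF fsnd_meas _ K_meas, where B=S and B'=1])
       (auto simp: space_pair_measure space_U01 space_MX fb U.finite_measure_axioms
         intro!: AE_I2 prob_space.emeasure_le_1 K_prob)
  also have "\<dots> = (\<integral>b. (\<integral>x. f x \<partial>Pt b) \<partial>U01)"
    by (intro Bochner_Integration.integral_cong refl int_Pt) (simp add: space_U01)
  finally show ?thesis .
qed

lemma meanPt_meas: "(\<lambda>b. \<integral>x. f x \<partial>Pt b) \<in> borel_measurable U01"
  by measurable

end


context kctx
begin

lemma fsnd_meas_P[measurable]: "(\<lambda>z. f (snd z)) \<in> borel_measurable (pairlaw Pt)"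
  using measurable_cong_sets[OF sets_pairlaw refl] fsnd_meas by blast

lemma sampleN_prob: "prob_space (sampleN N Pt)"
  unfolding sampleN_def by (rule prob_space_PiM) (rule pairlaw_prob)

lemma X_meas[measurable]: assumes "i < N" shows "(\<lambda>\<omega>. f (snd (\<omega> i))) \<in> borel_measurable (sampleN N Pt)"
proof -
  have "(\<lambda>\<omega>. \<omega> i) \<in> measurable (PiM {..<N} (\<lambda>_. pairlaw Pt)) (pairlaw Pt)"
    by (rule measurable_component_singleton) (simp add: assms)
  then show ?thesis unfolding sampleN_def by (rule measurable_compose[OF _ fsnd_meas_P])
qed

lemma Lest_meas[measurable]: "Lest N f \<in> borel_measurable (sampleN N Pt)"
  unfolding Lest_def[abs_def] by (intro borel_measurable_divide borel_measurable_sum X_meas) auto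

lemma space_sampleN: "\<omega> \<in> space (sampleN N Pt) \<Longrightarrow> i < N \<Longrightarrow> \<omega> i \<in> {0..1} \<times> cubeX"
  unfolding sampleN_def by (auto simp: space_PiM space_pairlaw)

lemma X_bnd: "\<omega> \<in> space (sampleN N Pt) \<Longrightarrow> i < N \<Longrightarrow> \<bar>f (snd (\<omega> i))\<bar> \<le> S"
  using space_sampleN fb by force

lemma distr_X: "i < N \<Longrightarrow> distr (sampleN N Pt) borel (\<lambda>\<omega>. f (snd (\<omega> i))) = distr (pairlaw Pt) borel (\<lambda>z. f (snd z))"
proof -
  assume i: "i < N"
  have "distr (sampleN N Pt) borel (\<lambda>\<omega>. f (snd (\<omega> i))) = distr (distr (sampleN N Pt) (pairlaw Pt) (\<lambda>\<omega>. \<omega> i)) borel (\<lambda>z. f (snd z))"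
    unfolding sampleN_def
    by (subst distr_distr) (auto simp: comp_def i)
  also have "distr (sampleN N Pt) (pairlaw Pt) (\<lambda>\<omega>. \<omega> i) = pairlaw Pt"
    unfolding sampleN_def by (rule distr_PiM_component) (auto simp: pairlaw_prob i)
  finally show ?thesis .
qed

lemma int_X: "i < N \<Longrightarrow> (\<integral>\<omega>. f (snd (\<omega> i)) \<partial>sampleN N Pt) = (\<integral>z. f (snd z) \<partial>pairlaw Pt)"
proof -
  assume i: "i < N"
  have "(\<integral>z. f (snd z) \<partial>pairlaw Pt) = (\<integral>z. z \<partial>distr (pairlaw Pt) borel (\<lambda>z. f (snd z)))"
    by (rule integral_distr[symmetric]) auto
  also have "\<dots> = (\<integral>z. z \<partial>distr (sampleN N Pt) borel (\<lambda>\<omega>. f (snd (\<omega> i))))"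
    by (simp add: distr_X i)
  also have "\<dots> = (\<integral>\<omega>. f (snd (\<omega> i)) \<partial>sampleN N Pt)"
    by (rule integral_distr) (auto simp: i)
  finally show ?thesis by simp
qed

lemma int_Lest: "N \<ge> 1 \<Longrightarrow> (\<integral>\<omega>. Lest N f \<omega> \<partial>sampleN N Pt) = (\<integral>z. f (snd z) \<partial>pairlaw Pt)"
proof -
  assume N: "N \<ge> 1"
  interpret prob_space "sampleN N Pt" by (rule sampleN_prob)
  have int: "integrable (sampleN N Pt) (\<lambda>\<omega>. f (snd (\<omega> i)))" if "i \<in> {..<N}" for i
    by (rule integrable_const_bound[where B=S]) (use that X_bnd in \<open>auto intro!: AE_I2\<close>)
  have "(\<integral>\<omega>. Lest N f \<omega> \<partial>sampleN N Pt) = (\<Sum>i<N. (\<integral>\<omega>. f (snd (\<omega> i)) \<partial>sampleN N Pt)) / real N"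
    unfolding Lest_def by (simp add: integral_sum int)
  also have "\<dots> = (\<integral>z. f (snd z) \<partial>pairlaw Pt)"
    using N by (simp add: int_X)
  finally show ?thesis .
qed

lemma indep_coords: "N \<ge> 1 \<Longrightarrow> prob_space.indep_vars (sampleN N Pt) (\<lambda>_. pairlaw Pt) (\<lambda>i \<omega>. \<omega> i) {..<N}"
proof -
  assume N: "N \<ge> 1"
  interpret prob_space "sampleN N Pt" by (rule sampleN_prob)
  show ?thesis
  proof (subst indep_vars_iff_distr_eq_PiM')
    show "{..<N} \<noteq> {}" using N by (simp add: lessThan_empty_iff)
    show "random_variable (pairlaw Pt) (\<lambda>\<omega>. \<omega> i)" if "i \<in> {..<N}" for i
      using that unfolding sampleN_def by simp
    have "distr (sampleN N Pt) (Pi\<^sub>M {..<N} (\<lambda>i. pairlaw Pt)) (\<lambda>x. restrict x {..<N})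
        = distr (sampleN N Pt) (Pi\<^sub>M {..<N} (\<lambda>i. pairlaw Pt)) (\<lambda>x. x)"
      by (rule distr_cong) (auto simp: sampleN_def space_PiM)
    also have "\<dots> = sampleN N Pt"
      by (rule distr_id2) (simp add: sampleN_def)
    also have "\<dots> = Pi\<^sub>M {..<N} (\<lambda>i. distr (sampleN N Pt) (pairlaw Pt) (\<lambda>\<omega>. \<omega> i))"
      unfolding sampleN_def
      by (rule PiM_cong, simp, rule distr_PiM_component[symmetric], rule pairlaw_prob, simp)
    finally show "distr (sampleN N Pt) (Pi\<^sub>M {..<N} (\<lambda>i. pairlaw Pt)) (\<lambda>x. restrict x {..<N})
        = Pi\<^sub>M {..<N} (\<lambda>i. distr (sampleN N Pt) (pairlaw Pt) (\<lambda>\<omega>. \<omega> i))" .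
  qed
qed

end


context kctx
begin

lemma hoeff:
  assumes N: "N \<ge> 1" and Spos: "S > 0" and e: "\<epsilon> \<ge> 0"
  shows "measure (sampleN N Pt) {\<omega> \<in> space (sampleN N Pt). \<bar>Lest N f \<omega> - (\<integral>z. f (snd z) \<partial>pairlaw Pt)\<bar> \<ge> \<epsilon>}
     \<le> 2 * exp (-2 * real N * \<epsilon>\<^sup>2 / (2 * S)\<^sup>2)"
proof -
  interpret prob_space "sampleN N Pt" by (rule sampleN_prob)
  define X :: "nat \<Rightarrow> (nat \<Rightarrow> real \<times> 'a) \<Rightarrow> real" where "X = (\<lambda>i \<omega>. f (snd (\<omega> i)))"
  define Y :: "(nat \<Rightarrow> real \<times> 'a) \<Rightarrow> real" where "Y = (\<lambda>\<omega>. f (snd (\<omega> (0::nat))))"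
  have N0: "0 < N" using N by simp
  interpret H: Hoeffding_ineq_iid "sampleN N Pt" "{..<N}" X Y "-S" S "expectation Y"
  proof unfold_locales
    show "indep_vars (\<lambda>_. borel) X {..<N}"
      unfolding X_def
      by (rule indep_vars_compose2[OF indep_coords[OF N]]) simp
    show "distr (sampleN N Pt) borel (X i) = distr (sampleN N Pt) borel Y" if "i \<in> {..<N}" for i
      using that N0 by (simp add: X_def Y_def distr_X)
    show "random_variable borel Y" unfolding Y_def using N0 by (rule X_meas)
    show "AE x in sampleN N Pt. Y x \<in> {- S..S}"
      by (rule AE_I2) (use X_bnd N0 in \<open>force simp: Y_def\<close>)
  qed simp
  have EY: "expectation Y = (\<integral>z. f (snd z) \<partial>pairlaw Pt)"
    unfolding Y_def using N0 by (rule int_X)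
  have "prob {x \<in> space (sampleN N Pt). \<bar>(\<Sum>i\<in>{..<N}. X i x) / real (card {..<N}) - expectation Y\<bar> \<ge> \<epsilon>}
     \<le> 2 * exp (-2 * real (card {..<N}) * \<epsilon>\<^sup>2 / (S - - S)\<^sup>2)"
    by (rule H.Hoeffding_ineq_abs_ge') (use e Spos N0 in auto)
  then show ?thesis
    by (simp add: EY Lest_def X_def)
qed

end

lemma dTV_upper:
  assumes P: "prob_space P" and Q: "prob_space Q" and A: "A \<in> sets P"
  shows "\<bar>measure P A - measure Q A\<bar> \<le> dTV P Q"
  unfolding dTV_def
proof (rule cSup_upper)
  show "\<bar>measure P A - measure Q A\<bar> \<in> {\<bar>measure P A - measure Q A\<bar> |A. A \<in> sets P}" using A by blast
  show "bdd_above {\<bar>measure P A - measure Q A\<bar> |A. A \<in> sets P}"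
  proof (rule bdd_aboveI)
    fix x assume "x \<in> {\<bar>measure P A - measure Q A\<bar> |A. A \<in> sets P}"
    then obtain B where x: "x = \<bar>measure P B - measure Q B\<bar>" by blast
    have "measure P B \<le> 1" "measure Q B \<le> 1"
      using prob_space.prob_le_1[OF P] prob_space.prob_le_1[OF Q] by auto
    moreover have "0 \<le> measure P B" "0 \<le> measure Q B" by auto
    ultimately show "x \<le> 1" unfolding x by linarith
  qed
qed

lemma dTV_le1:
  assumes P: "prob_space P" and Q: "prob_space Q"
  shows "dTV P Q \<le> 1"
  unfolding dTV_def
proof (rule cSup_least)
  show "{\<bar>measure P A - measure Q A\<bar> |A. A \<in> sets P} \<noteq> {}" by blast
  fix x assume "x \<in> {\<bar>measure P A - measure Q A\<bar> |A. A \<in> sets P}"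
  then obtain B where x: "x = \<bar>measure P B - measure Q B\<bar>" by blast
  have "measure P B \<le> 1" "measure Q B \<le> 1"
    using prob_space.prob_le_1[OF P] prob_space.prob_le_1[OF Q] by auto
  moreover have "0 \<le> measure P B" "0 \<le> measure Q B" by auto
  ultimately show "x \<le> 1" unfolding x by linarith
qed

lemma nat_aux: "1 \<le> k \<Longrightarrow> (int k \<le> z) = (k \<le> nat z)" by (cases "0 \<le> z") (simp_all add: le_nat_iff)
lemma count_floor:
  fixes t :: real and n :: nat
  assumes "0 \<le> t" "t \<le> 1" "n > 0"
  shows "(\<Sum>k\<in>{1..n}. if real k / real n \<le> t then 1 else 0 :: real) = real (nat \<lfloor>real n * t\<rfloor>)"
proof -
  have set: "{k\<in>{1..n}. real k / real n \<le> t} = {1..nat \<lfloor>real n * t\<rfloor>}"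
  proof -
    have i: "real k / real n \<le> t \<longleftrightarrow> int k \<le> \<lfloor>real n * t\<rfloor>" for k
    proof -
      have "real k / real n \<le> t \<longleftrightarrow> real k \<le> real n * t"
        using assms(3) pos_divide_le_eq[of "real n" "real k" t] by (simp add: mult.commute[of t])
      also have "\<dots> \<longleftrightarrow> int k \<le> \<lfloor>real n * t\<rfloor>"
        by (simp add: le_floor_iff)
      finally show ?thesis .
    qed
    have le: "nat \<lfloor>real n * t\<rfloor> \<le> n"
    proof -
      have "real n * t \<le> real n" using assms by (simp add: mult_left_le)
      then have "\<lfloor>real n * t\<rfloor> \<le> int n" by (simp add: floor_le_iff)
      then show ?thesis by simp
    qed
    show ?thesis
    proof (rule set_eqI)
      fix k
      show "k \<in> {k\<in>{1..n}. real k / real n \<le> t} \<longleftrightarrow> k \<in> {1..nat \<lfloor>real n * t\<rfloor>}"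
      proof (cases "1 \<le> k")
        case True
        then show ?thesis using i[of k] nat_aux[OF True, of "\<lfloor>real n * t\<rfloor>"] le
          by (simp only: mem_Collect_eq atLeastAtMost_iff) linarith
      qed simp
    qed
  qed
  have "(\<Sum>k\<in>{1..n}. if real k / real n \<le> t then 1 else 0 :: real) = (\<Sum>k\<in>{k\<in>{1..n}. real k / real n \<le> t}. 1)"
    by (rule sum.inter_filter[symmetric]) simp
  also have "\<dots> = real (nat \<lfloor>real n * t\<rfloor>)" unfolding set by simp
  finally show ?thesis .
qed
lemma count_bounds:
  fixes t :: real and n :: nat
  assumes "0 \<le> t" "t \<le> 1" "n > 0"
  shows "t - 1 / real n \<le> real (nat \<lfloor>real n * t\<rfloor>) / real n" "real (nat \<lfloor>real n * t\<rfloor>) / real n \<le> t"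
proof -
  have nt: "0 \<le> real n * t" using assms by simp
  have a: "real (nat \<lfloor>real n * t\<rfloor>) = of_int \<lfloor>real n * t\<rfloor>" using nt by simp
  have b: "real n * t - 1 < of_int \<lfloor>real n * t\<rfloor>" "of_int \<lfloor>real n * t\<rfloor> \<le> real n * t"
    by linarith+
  show "t - 1 / real n \<le> real (nat \<lfloor>real n * t\<rfloor>) / real n"
  proof -
    have "(real n * t - 1) / real n \<le> of_int \<lfloor>real n * t\<rfloor> / real n"
    proof (rule divide_right_mono)
      show "real n * t - 1 \<le> of_int \<lfloor>real n * t\<rfloor>" using b(1) by linarith
    qed simp
    moreover have "(real n * t - 1) / real n = t - 1 / real n"
      using assms(3) by (simp add: diff_divide_distrib)
    moreover have "real (nat \<lfloor>real n * t\<rfloor>) / real n = of_int \<lfloor>real n * t\<rfloor> / real n"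
      using a by simp
    ultimately show ?thesis by linarith
  qed
  show "real (nat \<lfloor>real n * t\<rfloor>) / real n \<le> t"
    using b(2) assms(3) unfolding a by (simp add: field_simps)
qed


lemma eps_nat: fixes x y :: real assumes "\<And>n::nat. n > 0 \<Longrightarrow> x \<le> y + 1 / real n" shows "x \<le> y"
proof (rule ccontr)
  assume "\<not> x \<le> y"
  then obtain n :: nat where n: "n > 0" "inverse (real n) < x - y"
    using ex_inverse_of_nat_less[of "x - y"] by auto
  with assms[OF n(1)] show False by (simp add: inverse_eq_divide)
qed

lemma hn_facts:
  fixes h :: "'a::euclidean_space \<Rightarrow> real" and M :: "'a measure" and n :: nat
  assumes M: "prob_space M" and sM: "sets M = sets MX" and hm[measurable]: "h \<in> borel_measurable MX"
    and hb: "\<And>x. x \<in> cubeX \<Longrightarrow> 0 \<le> h x \<and> h x \<le> 1" and n: "n > 0"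
  defines "A \<equiv> (\<lambda>k. {x \<in> cubeX. real k / real n \<le> h x})"
  shows "A k \<in> sets M"
    and "(\<integral>x. (\<Sum>k\<in>{1..n}. indicator (A k) x) / real n \<partial>M) = (\<Sum>k\<in>{1..n}. measure M (A k)) / real n"
    and "(\<integral>x. (\<Sum>k\<in>{1..n}. indicator (A k) x) / real n \<partial>M) \<le> (\<integral>x. h x \<partial>M)"
    and "(\<integral>x. h x \<partial>M) \<le> (\<integral>x. (\<Sum>k\<in>{1..n}. indicator (A k) x) / real n \<partial>M) + 1 / real n"
proof -
  interpret prob_space M by (rule M)
  have spM: "space M = cubeX" using sets_eq_imp_space_eq[OF sM] by (simp add: space_MX)
  have hmM[measurable]: "h \<in> borel_measurable M" using measurable_cong_sets[OF sM refl] hm by blast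
  have Ak: "A k \<in> sets M" for k
  proof -
    have "A k = {x \<in> space M. real k / real n \<le> h x}" by (simp add: A_def spM)
    also have "\<dots> \<in> sets M" by measurable
    finally show ?thesis .
  qed
  then show "A k \<in> sets M" .
  have intI: "integrable M (\<lambda>x. indicator (A k) x :: real)" for k
    using Ak by (simp add: integrable_indicator_iff emeasure_eq_measure)
  show eq: "(\<integral>x. (\<Sum>k\<in>{1..n}. indicator (A k) x) / real n \<partial>M) = (\<Sum>k\<in>{1..n}. measure M (A k)) / real n"
  proof -
    have "(\<integral>x. (\<Sum>k\<in>{1..n}. indicator (A k) x) / real n \<partial>M) = (\<integral>x. (\<Sum>k\<in>{1..n}. indicator (A k) x) \<partial>M) / real n"
      by (rule integral_divide_zero)
    also have "(\<integral>x. (\<Sum>k\<in>{1..n}. indicator (A k) x :: real) \<partial>M) = (\<Sum>k\<in>{1..n}. (\<integral>x. indicator (A k) x \<partial>M))"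
      by (rule Bochner_Integration.integral_sum) (rule intI)
    also have "\<dots> = (\<Sum>k\<in>{1..n}. measure M (A k))"
      by (intro sum.cong refl) (simp add: A_def spM Int_absorb2)
    finally show ?thesis .
  qed
  have pw: "(\<Sum>k\<in>{1..n}. indicator (A k) x) / real n = real (nat \<lfloor>real n * h x\<rfloor>) / real n" if x: "x \<in> cubeX" for x
  proof -
    have "(\<Sum>k\<in>{1..n}. indicator (A k) x) = (\<Sum>k\<in>{1..n}. if real k / real n \<le> h x then 1 else 0 :: real)"
      by (intro sum.cong refl) (simp add: A_def x indicator_def)
    also have "\<dots> = real (nat \<lfloor>real n * h x\<rfloor>)"
      using hb[OF x] n by (intro count_floor) auto
    finally show ?thesis by simp
  qed
  have inth: "integrable M h"
    by (rule integrable_const_bound[where B=1]) (use hb spM in \<open>auto intro!: AE_I2\<close>)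
  have inthn: "integrable M (\<lambda>x. (\<Sum>k\<in>{1..n}. indicator (A k) x) / real n)"
    by (intro integrable_divide_zero Bochner_Integration.integrable_sum intI)
  show "(\<integral>x. (\<Sum>k\<in>{1..n}. indicator (A k) x) / real n \<partial>M) \<le> (\<integral>x. h x \<partial>M)"
  proof (rule Bochner_Integration.integral_mono[OF inthn inth])
    fix x assume "x \<in> space M"
    then have x: "x \<in> cubeX" by (simp add: spM)
    show "(\<Sum>k\<in>{1..n}. indicator (A k) x) / real n \<le> h x"
      unfolding pw[OF x] using hb[OF x] n by (intro count_bounds) auto
  qed
  have "(\<integral>x. h x \<partial>M) \<le> (\<integral>x. (\<Sum>k\<in>{1..n}. indicator (A k) x) / real n + 1 / real n \<partial>M)"
  proof (rule Bochner_Integration.integral_mono[OF inth])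
    show "integrable M (\<lambda>x. (\<Sum>k\<in>{1..n}. indicator (A k) x) / real n + 1 / real n)"
      by (intro Bochner_Integration.integrable_add inthn integrable_const)
    fix x assume "x \<in> space M"
    then have x: "x \<in> cubeX" by (simp add: spM)
    have "h x - 1 / real n \<le> real (nat \<lfloor>real n * h x\<rfloor>) / real n"
      using hb[OF x] n by (intro count_bounds) auto
    then show "h x \<le> (\<Sum>k\<in>{1..n}. indicator (A k) x) / real n + 1 / real n"
      unfolding pw[OF x] by linarith
  qed
  also have "\<dots> = (\<integral>x. (\<Sum>k\<in>{1..n}. indicator (A k) x) / real n \<partial>M) + 1 / real n"
    by (subst Bochner_Integration.integral_add[OF inthn]) (auto simp: prob_space)
  finally show "(\<integral>x. h x \<partial>M) \<le> (\<integral>x. (\<Sum>k\<in>{1..n}. indicator (A k) x) / real n \<partial>M) + 1 / real n" .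
qed


lemma zero_cubeX: "0 \<in> cubeX" by (auto simp: cubeX_def mem_box)

lemma tv_bound:
  fixes f :: "'a::euclidean_space \<Rightarrow> real"
  assumes P: "prob_space P" and Q: "prob_space Q" and sP: "sets P = sets MX" and sQ: "sets Q = sets MX"
    and fm[measurable]: "f \<in> borel_measurable MX" and fb: "\<And>x. x \<in> cubeX \<Longrightarrow> \<bar>f x\<bar> \<le> S"
  shows "\<bar>(\<integral>x. f x \<partial>P) - (\<integral>x. f x \<partial>Q)\<bar> \<le> 2 * S * dTV P Q"
proof -
  interpret P: prob_space P by (rule P)
  interpret Q: prob_space Q by (rule Q)
  have spP: "space P = cubeX" using sets_eq_imp_space_eq[OF sP] by (simp add: space_MX)
  have spQ: "space Q = cubeX" using sets_eq_imp_space_eq[OF sQ] by (simp add: space_MX)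
  have S0: "0 \<le> S" using fb[OF zero_cubeX] by linarith
  show ?thesis
  proof (cases "S = 0")
    case True
    then have "\<And>x. x \<in> cubeX \<Longrightarrow> f x = 0" using fb by force
    then have "(\<integral>x. f x \<partial>P) = 0" "(\<integral>x. f x \<partial>Q) = 0"
      by (auto simp: spP spQ intro!: integral_eq_zero_AE AE_I2)
    then show ?thesis using True by simp
  next
    case False
    then have Spos: "S > 0" using S0 by simp
    define h where "h = (\<lambda>x. (f x + S) / (2 * S))"
    have hm[measurable]: "h \<in> borel_measurable MX" unfolding h_def by measurable
    have hb: "0 \<le> h x \<and> h x \<le> 1" if "x \<in> cubeX" for x
      using fb[OF that] Spos by (auto simp: h_def abs_le_iff field_simps)
    have fh: "f x = 2 * S * h x - S" for x using Spos by (simp add: h_def field_simps)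
    have intf: "(\<integral>x. f x \<partial>M) = 2 * S * (\<integral>x. h x \<partial>M) - S" if M: "prob_space M" and sM: "sets M = sets MX" for M
    proof -
      interpret M: prob_space M by (rule M)
      have spM: "space M = cubeX" using sets_eq_imp_space_eq[OF sM] by (simp add: space_MX)
      have hmM[measurable]: "h \<in> borel_measurable M" using measurable_cong_sets[OF sM refl] hm by blast
      have inth: "integrable M h"
        by (rule M.integrable_const_bound[where B=1]) (use hb spM in \<open>auto intro!: AE_I2\<close>)
      have "(\<integral>x. f x \<partial>M) = (\<integral>x. 2 * S * h x - S \<partial>M)" by (simp add: fh)
      also have "\<dots> = 2 * S * (\<integral>x. h x \<partial>M) - S"
        using inth by (simp add: M.prob_space)
      finally show ?thesis .
    qed
    have key: "\<bar>(\<integral>x. h x \<partial>P) - (\<integral>x. h x \<partial>Q)\<bar> \<le> dTV P Q + 1 / real n" if n: "n > 0" for n :: nat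
    proof -
      define A where "A = (\<lambda>k. {x \<in> cubeX. real k / real n \<le> h x})"
      define hn where "hn = (\<lambda>x. (\<Sum>k\<in>{1..n}. indicator (A k) x) / real n :: real)"
      note HP = hn_facts[OF P sP hm hb n]
      note HQ = hn_facts[OF Q sQ hm hb n]
      have eP: "(\<integral>x. hn x \<partial>P) = (\<Sum>k\<in>{1..n}. measure P (A k)) / real n" unfolding hn_def A_def by (rule HP(2))
      have eQ: "(\<integral>x. hn x \<partial>Q) = (\<Sum>k\<in>{1..n}. measure Q (A k)) / real n" unfolding hn_def A_def by (rule HQ(2))
      have AkP: "A k \<in> sets P" for k unfolding A_def by (rule HP(1))
      have P3: "(\<integral>x. hn x \<partial>P) \<le> (\<integral>x. h x \<partial>P)" unfolding hn_def A_def by (rule HP(3))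
      have P4: "(\<integral>x. h x \<partial>P) \<le> (\<integral>x. hn x \<partial>P) + 1 / real n" unfolding hn_def A_def by (rule HP(4))
      have Q3: "(\<integral>x. hn x \<partial>Q) \<le> (\<integral>x. h x \<partial>Q)" unfolding hn_def A_def by (rule HQ(3))
      have Q4: "(\<integral>x. h x \<partial>Q) \<le> (\<integral>x. hn x \<partial>Q) + 1 / real n" unfolding hn_def A_def by (rule HQ(4))
      have "\<bar>(\<integral>x. hn x \<partial>P) - (\<integral>x. hn x \<partial>Q)\<bar> = \<bar>\<Sum>k\<in>{1..n}. measure P (A k) - measure Q (A k)\<bar> / real n"
        unfolding eP eQ by (simp add: sum_subtractf diff_divide_distrib[symmetric])
      also have "\<dots> \<le> (\<Sum>k\<in>{1..n}. \<bar>measure P (A k) - measure Q (A k)\<bar>) / real n"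
        by (intro divide_right_mono sum_abs) auto
      also have "\<dots> \<le> (real (card {1..n}) * dTV P Q) / real n"
        by (intro divide_right_mono sum_bounded_above dTV_upper P Q AkP) auto
      also have "\<dots> = dTV P Q" using n by simp
      finally have d: "\<bar>(\<integral>x. hn x \<partial>P) - (\<integral>x. hn x \<partial>Q)\<bar> \<le> dTV P Q" .
      show ?thesis using d P3 P4 Q3 Q4 by (simp add: abs_le_iff)
    qed
    have "\<bar>(\<integral>x. h x \<partial>P) - (\<integral>x. h x \<partial>Q)\<bar> \<le> dTV P Q"
      by (rule eps_nat) (rule key)
    moreover have "\<bar>(\<integral>x. f x \<partial>P) - (\<integral>x. f x \<partial>Q)\<bar> = 2 * S * \<bar>(\<integral>x. h x \<partial>P) - (\<integral>x. h x \<partial>Q)\<bar>"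
      unfolding intf[OF P sP] intf[OF Q sQ] using Spos by (simp add: abs_mult right_diff_distrib[symmetric])
    ultimately show ?thesis using Spos by (simp add: mult_left_mono)
  qed
qed


lemma idMX[measurable]: "(\<lambda>x. x) \<in> measurable (MX :: 'a::euclidean_space measure) borel"
  unfolding MX_def by (rule measurable_restrict_space1) simp

lemma prod_coupling:
  assumes P: "prob_space P" and Q: "prob_space Q" and sP: "sets P = sets MX" and sQ: "sets Q = sets MX"
  shows "P \<Otimes>\<^sub>M Q \<in> couplings MX P Q"
proof -
  interpret P: prob_space P by (rule P)
  interpret Q: prob_space Q by (rule Q)
  interpret PQ: pair_prob_space P Q by unfold_locales
  have s: "sets (P \<Otimes>\<^sub>M Q) = sets (MX \<Otimes>\<^sub>M MX)" by (rule sets_pair_measure_cong[OF sP sQ])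
  have d1: "distr (P \<Otimes>\<^sub>M Q) MX fst = P"
  proof -
    have "distr (P \<Otimes>\<^sub>M Q) MX fst = distr (P \<Otimes>\<^sub>M Q) P fst"
      by (rule distr_cong) (simp_all add: sP)
    also have "\<dots> = P" by (rule Q.distr_pair_fst)
    finally show ?thesis .
  qed
  have d2: "distr (P \<Otimes>\<^sub>M Q) MX snd = Q"
  proof -
    have "distr (P \<Otimes>\<^sub>M Q) MX snd = distr (P \<Otimes>\<^sub>M Q) Q snd"
      by (rule distr_cong) (simp_all add: sQ)
    also have "\<dots> = Q"
    proof (intro measure_eqI)
      fix A assume A: "A \<in> sets (distr (P \<Otimes>\<^sub>M Q) Q snd)"
      then have A': "A \<in> sets Q" by simp
      have "emeasure (distr (P \<Otimes>\<^sub>M Q) Q snd) A = emeasure (P \<Otimes>\<^sub>M Q) (space P \<times> A)"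
        using A' by (auto simp add: emeasure_distr space_pair_measure dest: sets.sets_into_space intro!: arg_cong2[where f=emeasure])
      also have "\<dots> = emeasure Q A"
        using A' by (simp add: Q.emeasure_pair_measure_Times P.emeasure_space_1)
      finally show "emeasure (distr (P \<Otimes>\<^sub>M Q) Q snd) A = emeasure Q A" .
    qed simp
    finally show ?thesis .
  qed
  show ?thesis unfolding couplings_def using s d1 d2 PQ.prob_space_axioms by blast
qed

lemma cube_bounded: "\<exists>B. \<forall>x\<in>cubeX. \<forall>y\<in>cubeX. dist x y \<le> B"
proof -
  have "bounded (cubeX :: 'a set)" by (simp add: cubeX_def)
  then obtain B where B: "\<forall>x\<in>(cubeX :: 'a set). norm x \<le> B" by (auto simp: bounded_iff)
  have "dist x y \<le> 2 * B" if "x \<in> cubeX" "y \<in> cubeX" for x y :: 'a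
    using B[rule_format, OF that(1)] B[rule_format, OF that(2)] norm_triangle_ineq4[of x y] by (simp add: dist_norm)
  then show ?thesis by blast
qed

lemma coupling_facts:
  assumes pi: "\<pi> \<in> couplings MX P Q" and Bd: "\<forall>x\<in>(cubeX::'a::euclidean_space set). \<forall>y\<in>cubeX. dist x y \<le> B"
  shows "integrable \<pi> (\<lambda>z. dist (fst z) (snd z :: 'a::euclidean_space))"
    and "0 \<le> (\<integral>z. dist (fst z) (snd z) \<partial>\<pi>)"
    and "(\<integral>z. dist (fst z) (snd z) \<partial>\<pi>) \<le> B"
    and "space \<pi> = cubeX \<times> cubeX"
    and "fst \<in> measurable \<pi> MX" and "snd \<in> measurable \<pi> MX"
proof -
  have s: "sets \<pi> = sets (MX \<Otimes>\<^sub>M MX)" and pr: "prob_space \<pi>"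
    using pi by (auto simp: couplings_def)
  interpret prob_space \<pi> by (rule pr)
  show sp: "space \<pi> = cubeX \<times> cubeX"
    using sets_eq_imp_space_eq[OF s] by (simp add: space_pair_measure space_MX)
  show fm: "fst \<in> measurable \<pi> MX" using measurable_cong_sets[OF s refl] measurable_fst by blast
  show sm: "snd \<in> measurable \<pi> MX" using measurable_cong_sets[OF s refl] measurable_snd by blast
  have dm: "(\<lambda>z. dist (fst z) (snd z :: 'a)) \<in> borel_measurable \<pi>"
    by (intro borel_measurable_dist measurable_compose[OF fm idMX] measurable_compose[OF sm idMX])
  show int: "integrable \<pi> (\<lambda>z. dist (fst z) (snd z :: 'a))"
    by (rule integrable_const_bound[where B=B]) (use Bd sp dm in \<open>auto intro!: AE_I2\<close>)
  show "0 \<le> (\<integral>z. dist (fst z) (snd z) \<partial>\<pi>)" by simp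
  have "(\<integral>z. dist (fst z) (snd z) \<partial>\<pi>) \<le> (\<integral>z. B \<partial>\<pi>)"
    by (rule Bochner_Integration.integral_mono[OF int]) (use Bd sp in auto)
  then show "(\<integral>z. dist (fst z) (snd z) \<partial>\<pi>) \<le> B" by (simp add: prob_space)
qed

lemma W1_le:
  fixes P Q :: "'a::euclidean_space measure"
  assumes P: "prob_space P" and Q: "prob_space Q" and sP: "sets P = sets MX" and sQ: "sets Q = sets MX"
    and Bd: "\<forall>x\<in>(cubeX::'a set). \<forall>y\<in>cubeX. dist x y \<le> B"
  shows "W1 MX P Q \<le> (B :: real)"
proof -
  have pc: "P \<Otimes>\<^sub>M Q \<in> couplings MX P Q" by (rule prod_coupling[OF P Q sP sQ])
  have "W1 MX P Q \<le> (\<integral>z. dist (fst z) (snd z) \<partial>(P \<Otimes>\<^sub>M Q))"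
    unfolding W1_def
  proof (rule cInf_lower)
    show "(\<integral>z. dist (fst z) (snd z) \<partial>(P \<Otimes>\<^sub>M Q)) \<in> {integral\<^sup>L \<pi> (\<lambda>z. dist (fst z) (snd z)) |\<pi>. \<pi> \<in> couplings MX P Q}"
      using pc by blast
    show "bdd_below {integral\<^sup>L \<pi> (\<lambda>z. dist (fst z) (snd z)) |\<pi>. \<pi> \<in> couplings MX P Q}"
      by (rule bdd_belowI[where m=0]) (auto intro: coupling_facts(2)[OF _ Bd])
  qed
  also have "\<dots> \<le> B" by (rule coupling_facts(3)[OF pc Bd])
  finally show ?thesis .
qed

lemma w1_bound:
  fixes f :: "'a::euclidean_space \<Rightarrow> real"
  assumes P: "prob_space P" and Q: "prob_space Q" and sP: "sets P = sets MX" and sQ: "sets Q = sets MX"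
    and fm[measurable]: "f \<in> borel_measurable MX" and fb: "\<And>x. x \<in> cubeX \<Longrightarrow> \<bar>f x\<bar> \<le> S"
    and L: "lipschitz_on L cubeX f"
  shows "\<bar>(\<integral>x. f x \<partial>P) - (\<integral>x. f x \<partial>Q)\<bar> \<le> L * W1 MX P Q"
proof -
  obtain B where Bd: "\<forall>x\<in>(cubeX::'a set). \<forall>y\<in>cubeX. dist x y \<le> B" using cube_bounded by blast
  have L0: "0 \<le> L" using L by (simp add: lipschitz_on_def)
  have each: "\<bar>(\<integral>x. f x \<partial>P) - (\<integral>x. f x \<partial>Q)\<bar> \<le> L * (\<integral>z. dist (fst z) (snd z) \<partial>\<pi>)"
    if pi: "\<pi> \<in> couplings MX P Q" for \<pi>
  proof -
    have pr: "prob_space \<pi>" and dP: "distr \<pi> MX fst = P" and dQ: "distr \<pi> MX snd = Q"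
      using pi by (auto simp: couplings_def)
    interpret prob_space \<pi> by (rule pr)
    note CF = coupling_facts[OF pi Bd]
    have e1: "(\<integral>x. f x \<partial>P) = (\<integral>z. f (fst z) \<partial>\<pi>)"
      unfolding dP[symmetric] by (rule integral_distr[OF CF(5) fm])
    have e2: "(\<integral>x. f x \<partial>Q) = (\<integral>z. f (snd z) \<partial>\<pi>)"
      unfolding dQ[symmetric] by (rule integral_distr[OF CF(6) fm])
    have m1[measurable]: "(\<lambda>z. f (fst z)) \<in> borel_measurable \<pi>" by (rule measurable_compose[OF CF(5) fm])
    have m2[measurable]: "(\<lambda>z. f (snd z)) \<in> borel_measurable \<pi>" by (rule measurable_compose[OF CF(6) fm])
    have i1: "integrable \<pi> (\<lambda>z. f (fst z))"
      by (rule integrable_const_bound[where B=S]) (use fb CF(4) in \<open>auto intro!: AE_I2\<close>)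
    have i2: "integrable \<pi> (\<lambda>z. f (snd z))"
      by (rule integrable_const_bound[where B=S]) (use fb CF(4) in \<open>auto intro!: AE_I2\<close>)
    have "\<bar>(\<integral>x. f x \<partial>P) - (\<integral>x. f x \<partial>Q)\<bar> = \<bar>\<integral>z. f (fst z) - f (snd z) \<partial>\<pi>\<bar>"
      unfolding e1 e2 by (simp add: Bochner_Integration.integral_diff[OF i1 i2])
    also have "\<dots> \<le> (\<integral>z. \<bar>f (fst z) - f (snd z)\<bar> \<partial>\<pi>)"
      using integral_norm_bound[of \<pi> "\<lambda>z. f (fst z) - f (snd z)"] by simp
    also have "\<dots> \<le> (\<integral>z. L * dist (fst z) (snd z) \<partial>\<pi>)"
    proof (rule Bochner_Integration.integral_mono)
      show "integrable \<pi> (\<lambda>z. \<bar>f (fst z) - f (snd z)\<bar>)"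
        by (intro integrable_abs Bochner_Integration.integrable_diff i1 i2)
      show "integrable \<pi> (\<lambda>z. L * dist (fst z) (snd z))"
        by (intro integrable_mult_right CF(1))
      fix z assume "z \<in> space \<pi>"
      then have "z \<in> cubeX \<times> cubeX" unfolding CF(4) .
      then have "fst z \<in> cubeX" "snd z \<in> cubeX" by (simp_all add: mem_Times_iff)
      then show "\<bar>f (fst z) - f (snd z)\<bar> \<le> L * dist (fst z) (snd z)"
        using lipschitz_onD[OF L] by (simp add: dist_real_def)
    qed
    also have "\<dots> = L * (\<integral>z. dist (fst z) (snd z) \<partial>\<pi>)" by simp
    finally show ?thesis .
  qed
  have pc: "P \<Otimes>\<^sub>M Q \<in> couplings MX P Q" by (rule prod_coupling[OF P Q sP sQ])
  show ?thesis
  proof (cases "L = 0")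
    case True
    then show ?thesis using each[OF pc] by simp
  next
    case False
    then have Lp: "L > 0" using L0 by simp
    have "\<bar>(\<integral>x. f x \<partial>P) - (\<integral>x. f x \<partial>Q)\<bar> / L \<le> W1 MX P Q"
      unfolding W1_def
    proof (rule cInf_greatest)
      show "{integral\<^sup>L \<pi> (\<lambda>z. dist (fst z) (snd z)) |\<pi>. \<pi> \<in> couplings MX P Q} \<noteq> {}" using pc by blast
      fix c assume "c \<in> {integral\<^sup>L \<pi> (\<lambda>z. dist (fst z) (snd z)) |\<pi>. \<pi> \<in> couplings MX P Q}"
      then obtain \<pi> where pi: "\<pi> \<in> couplings MX P Q" and c: "c = (\<integral>z. dist (fst z) (snd z) \<partial>\<pi>)" by blast
      show "\<bar>(\<integral>x. f x \<partial>P) - (\<integral>x. f x \<partial>Q)\<bar> / L \<le> c"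
        using each[OF pi] Lp unfolding c by (simp add: divide_le_eq mult.commute)
    qed
    then show ?thesis using Lp by (simp add: divide_le_eq mult.commute)
  qed
qed


lemma (in fctx) Ph_prob: "prob_space (Ph (\<lambda>x. c * f x))"
proof
  interpret prob_space MX by (rule prob_MX)
  have Zh: "Zh (\<lambda>x. c * f x) = Z c" by (simp add: Zh_def Z_def)
  have int: "integrable MX (\<lambda>x. exp (c * f x) / Z c)"
  proof (rule integrable_const_bound[where B="exp (\<bar>c\<bar> * S) / Z c"])
    show "AE x in MX. norm (exp (c * f x) / Z c) \<le> exp (\<bar>c\<bar> * S) / Z c"
    proof (rule AE_I2)
      fix x :: 'a assume x: "x \<in> space MX"
      have "\<bar>c * f x\<bar> \<le> \<bar>c\<bar> * S" using fb'[OF x] by (simp add: abs_mult mult_left_mono)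
      then have "exp (c * f x) \<le> exp (\<bar>c\<bar> * S)" by simp
      then show "norm (exp (c * f x) / Z c) \<le> exp (\<bar>c\<bar> * S) / Z c"
        using Z_pos[of c] by (simp add: divide_right_mono)
    qed
  qed simp
  have "emeasure (Ph (\<lambda>x. c * f x)) (space (Ph (\<lambda>x. c * f x))) = (\<integral>\<^sup>+x. ennreal (exp (c * f x) / Z c) \<partial>MX)"
    unfolding Ph_def Zh by (simp add: emeasure_density)
  also have "\<dots> = ennreal (\<integral>x. exp (c * f x) / Z c \<partial>MX)"
    by (rule nn_integral_eq_integral[OF int]) (simp add: Z_pos less_imp_le)
  also have "(\<integral>x. exp (c * f x) / Z c \<partial>MX) = 1"
    using Z_pos[of c] by (simp add: Z_def[symmetric])
  finally show "emeasure (Ph (\<lambda>x. c * f x)) (space (Ph (\<lambda>x. c * f x))) = 1" by simp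
qed

lemma sets_Ph: "sets (Ph h) = sets MX"
  by (simp add: Ph_def)

lemma int_bound_S:
  fixes f :: "'a::euclidean_space \<Rightarrow> real"
  assumes M: "prob_space M" and sM: "sets M = sets MX" and fm: "f \<in> borel_measurable MX"
    and fb: "\<And>x. x \<in> cubeX \<Longrightarrow> \<bar>f x\<bar> \<le> S"
  shows "\<bar>\<integral>x. f x \<partial>M\<bar> \<le> S"
proof -
  interpret prob_space M by (rule M)
  have spM: "space M = cubeX" using sets_eq_imp_space_eq[OF sM] by (simp add: space_MX)
  have fmM: "f \<in> borel_measurable M" using measurable_cong_sets[OF sM refl] fm by blast
  have "\<bar>\<integral>x. f x \<partial>M\<bar> \<le> (\<integral>x. \<bar>f x\<bar> \<partial>M)"
    using integral_norm_bound[of M f] by simp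
  also have "\<dots> \<le> (\<integral>x. S \<partial>M)"
  proof (rule Bochner_Integration.integral_mono)
    show "integrable M (\<lambda>x. \<bar>f x\<bar>)"
      by (rule integrable_const_bound[where B=S]) (use fb spM fmM in \<open>auto intro!: AE_I2\<close>)
  qed (use fb spM in auto)
  also have "\<dots> = S" by (simp add: prob_space)
  finally show ?thesis .
qed

lemma int_diff_bound:
  fixes a b :: "real \<Rightarrow> real"
  assumes M: "prob_space M" and am: "a \<in> borel_measurable M" and bm: "b \<in> borel_measurable M"
    and ab: "\<And>x. x \<in> space M \<Longrightarrow> \<bar>a x\<bar> \<le> S" and bb: "\<And>x. x \<in> space M \<Longrightarrow> \<bar>b x\<bar> \<le> S"
    and C: "\<And>x. x \<in> space M \<Longrightarrow> \<bar>a x - b x\<bar> \<le> C"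
  shows "\<bar>(\<integral>x. a x \<partial>M) - (\<integral>x. b x \<partial>M)\<bar> \<le> C"
proof -
  interpret prob_space M by (rule M)
  have ia: "integrable M a" by (rule integrable_const_bound[where B=S]) (use ab am in \<open>auto intro!: AE_I2\<close>)
  have ib: "integrable M b" by (rule integrable_const_bound[where B=S]) (use bb bm in \<open>auto intro!: AE_I2\<close>)
  have "\<bar>(\<integral>x. a x \<partial>M) - (\<integral>x. b x \<partial>M)\<bar> = \<bar>\<integral>x. a x - b x \<partial>M\<bar>"
    by (simp add: Bochner_Integration.integral_diff[OF ia ib])
  also have "\<dots> \<le> (\<integral>x. \<bar>a x - b x\<bar> \<partial>M)"
    using integral_norm_bound[of M "\<lambda>x. a x - b x"] by simp
  also have "\<dots> \<le> (\<integral>x. C \<partial>M)"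
  proof (rule Bochner_Integration.integral_mono)
    show "integrable M (\<lambda>x. \<bar>a x - b x\<bar>)"
      by (intro integrable_abs Bochner_Integration.integrable_diff ia ib)
  qed (use C in auto)
  also have "\<dots> = C" by (simp add: prob_space)
  finally show ?thesis .
qed

lemma lipconst_lip:
  assumes "\<exists>C. lipschitz_on C U f"
  shows "lipschitz_on (Inf {C. lipschitz_on C U f}) U f"
proof -
  let ?A = "{C. lipschitz_on C U f}"
  have ne: "?A \<noteq> {}" using assms by blast
  have lb: "\<And>C. C \<in> ?A \<Longrightarrow> 0 \<le> C" by (simp add: lipschitz_on_def)
  have "0 \<le> Inf ?A" by (rule cInf_greatest[OF ne]) (use lb in blast)
  moreover have "dist (f x) (f y) \<le> Inf ?A * dist x y" if x: "x \<in> U" and y: "y \<in> U" for x y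
  proof (cases "dist x y = 0")
    case True
    then show ?thesis by simp
  next
    case False
    then have dpos: "dist x y > 0" by simp
    have "dist (f x) (f y) / dist x y \<le> Inf ?A"
    proof (rule cInf_greatest[OF ne])
      fix C assume "C \<in> ?A"
      then have "dist (f x) (f y) \<le> C * dist x y" using lipschitz_onD x y by blast
      then show "dist (f x) (f y) / dist x y \<le> C" using dpos by (simp add: divide_le_eq)
    qed
    then show ?thesis using dpos by (simp add: divide_le_eq)
  qed
  ultimately show ?thesis by (simp add: lipschitz_on_def)
qed

theorem theorem13:
  fixes f :: "'a::euclidean_space \<Rightarrow> real"
    and N :: nat
    and Pt :: "real \<Rightarrow> 'a measure"
    and \<delta> :: real
  assumes f_meas: "f \<in> borel_measurable MX"
    and f_bdd: "bounded (f ` cubeX)"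
    and N_pos: "N \<ge> 1"
    and Pt_kernel: "Pt \<in> measurable U01 (subprob_algebra MX)"
    and Pt_prob: "\<And>\<beta>. \<beta> \<in> {0..1} \<Longrightarrow> prob_space (Pt \<beta>)"
    and delta_pos: "\<delta> > 0"
  shows "measure (sampleN N Pt)
           {\<omega> \<in> space (sampleN N Pt).
              \<bar>Lest N f \<omega> - Lh f\<bar>
                \<le> \<bar>Lh f - integral\<^sup>L (sampleN N Pt) (Lest N f)\<bar>
                  + 2 * supnorm f * sqrt (ln (2 / \<delta>) / (2 * real N))} \<ge> 1 - \<delta>
       \<and> \<bar>Lh f - integral\<^sup>L (sampleN N Pt) (Lest N f)\<bar>
           \<le> 2 * supnorm f * (SUP \<beta>\<in>{0..1}. dTV (Ph (\<lambda>x. \<beta> * f x)) (Pt \<beta>))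
       \<and> ((\<exists>C. lipschitz_on C cubeX f) \<longrightarrow>
         \<bar>Lh f - integral\<^sup>L (sampleN N Pt) (Lest N f)\<bar>
           \<le> lipconst f * (SUP \<beta>\<in>{0..1}. W1 MX (Ph (\<lambda>x. \<beta> * f x)) (Pt \<beta>)))"
proof -
  define S where "S = supnorm f"
  have bddA: "bdd_above ((\<lambda>x. \<bar>f x\<bar>) ` cubeX)"
  proof -
    obtain B where "\<forall>y\<in>f ` cubeX. norm y \<le> B" using f_bdd by (auto simp: bounded_iff)
    then show ?thesis by (auto intro!: bdd_aboveI[where M=B])
  qed
  have fb: "\<bar>f x\<bar> \<le> S" if "x \<in> cubeX" for x
    unfolding S_def supnorm_def by (rule cSUP_upper[OF that bddA])
  have kc: "kctx f S Pt"
    unfolding kctx_def kctx_axioms_def fctx_def using f_meas fb Pt_kernel Pt_prob by blast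
  interpret kctx f S Pt by (rule kc)
  define \<Omega> where "\<Omega> = sampleN N Pt"
  define E where "E = integral\<^sup>L \<Omega> (Lest N f)"
  define a where "a = (\<lambda>\<beta>. \<integral>x. f x \<partial>Ph (\<lambda>x. \<beta> * f x))"
  define b where "b = (\<lambda>\<beta>. \<integral>x. f x \<partial>Pt \<beta>)"
  have E_eq: "E = (\<integral>\<beta>. b \<beta> \<partial>U01)"
    unfolding E_def \<Omega>_def b_def by (simp only: int_Lest[OF N_pos] int_pairlaw)
  have a_eq: "a = (\<lambda>c. Z1 c / Z c)" unfolding a_def by (simp add: mean_Ph fun_eq_iff)
  have L_eq: "Lh f = (\<integral>\<beta>. a \<beta> \<partial>U01)" unfolding a_eq by (rule thermo)
  have am: "a \<in> borel_measurable U01" unfolding a_eq by (rule mean_meas)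
  have bm: "b \<in> borel_measurable U01" unfolding b_def by (rule meanPt_meas)
  have ab: "\<bar>a \<beta>\<bar> \<le> S" for \<beta>
    unfolding a_def by (rule int_bound_S[OF Ph_prob sets_Ph f_meas fb])
  have bb: "\<bar>b \<beta>\<bar> \<le> S" if "\<beta> \<in> {0..1}" for \<beta>
    unfolding b_def by (rule int_bound_S[OF Pt_prob[OF that] sets_Pt[OF that] f_meas fb])
  have main: "\<bar>Lh f - E\<bar> \<le> C" if C: "\<And>\<beta>. \<beta> \<in> {0..1} \<Longrightarrow> \<bar>a \<beta> - b \<beta>\<bar> \<le> C" for C
    unfolding L_eq E_eq
    by (rule int_diff_bound[where S=S, OF prob_U01 am bm]) (auto simp: space_U01 ab bb C)
  have part2: "\<bar>Lh f - E\<bar> \<le> 2 * S * (SUP \<beta>\<in>{0..1}. dTV (Ph (\<lambda>x. \<beta> * f x)) (Pt \<beta>))"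
  proof (rule main)
    fix \<beta> :: real assume \<beta>: "\<beta> \<in> {0..1}"
    have "\<bar>a \<beta> - b \<beta>\<bar> \<le> 2 * S * dTV (Ph (\<lambda>x. \<beta> * f x)) (Pt \<beta>)"
      unfolding a_def b_def
      by (rule tv_bound[OF Ph_prob Pt_prob[OF \<beta>] sets_Ph sets_Pt[OF \<beta>] f_meas fb])
    also have "\<dots> \<le> 2 * S * (SUP \<beta>\<in>{0..1}. dTV (Ph (\<lambda>x. \<beta> * f x)) (Pt \<beta>))"
    proof (rule mult_left_mono)
      show "dTV (Ph (\<lambda>x. \<beta> * f x)) (Pt \<beta>) \<le> (SUP \<beta>\<in>{0..1}. dTV (Ph (\<lambda>x. \<beta> * f x)) (Pt \<beta>))"
      proof (rule cSUP_upper[OF \<beta>])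
        show "bdd_above ((\<lambda>\<beta>. dTV (Ph (\<lambda>x. \<beta> * f x)) (Pt \<beta>)) ` {0..1})"
          by (rule bdd_aboveI[where M=1]) (auto intro!: dTV_le1 Ph_prob Pt_prob)
      qed
    qed (use S0 in simp)
    finally show "\<bar>a \<beta> - b \<beta>\<bar> \<le> 2 * S * (SUP \<beta>\<in>{0..1}. dTV (Ph (\<lambda>x. \<beta> * f x)) (Pt \<beta>))" .
  qed
  have part3: "\<bar>Lh f - E\<bar> \<le> lipconst f * (SUP \<beta>\<in>{0..1}. W1 MX (Ph (\<lambda>x. \<beta> * f x)) (Pt \<beta>))"
    if lip: "\<exists>C. lipschitz_on C cubeX f"
  proof (rule main)
    have L: "lipschitz_on (lipconst f) cubeX f" unfolding lipconst_def by (rule lipconst_lip[OF lip])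
    have L0: "0 \<le> lipconst f" using L by (simp add: lipschitz_on_def)
    obtain B where Bd: "\<forall>x\<in>(cubeX::'a set). \<forall>y\<in>cubeX. dist x y \<le> B" using cube_bounded by blast
    fix \<beta> :: real assume \<beta>: "\<beta> \<in> {0..1}"
    have "\<bar>a \<beta> - b \<beta>\<bar> \<le> lipconst f * W1 MX (Ph (\<lambda>x. \<beta> * f x)) (Pt \<beta>)"
      unfolding a_def b_def
      by (rule w1_bound[OF Ph_prob Pt_prob[OF \<beta>] sets_Ph sets_Pt[OF \<beta>] f_meas fb L])
    also have "\<dots> \<le> lipconst f * (SUP \<beta>\<in>{0..1}. W1 MX (Ph (\<lambda>x. \<beta> * f x)) (Pt \<beta>))"
    proof (rule mult_left_mono[OF _ L0])
      show "W1 MX (Ph (\<lambda>x. \<beta> * f x)) (Pt \<beta>) \<le> (SUP \<beta>\<in>{0..1}. W1 MX (Ph (\<lambda>x. \<beta> * f x)) (Pt \<beta>))"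
      proof (rule cSUP_upper[OF \<beta>])
        show "bdd_above ((\<lambda>\<beta>. W1 MX (Ph (\<lambda>x. \<beta> * f x)) (Pt \<beta>)) ` {0..1})"
          by (rule bdd_aboveI[where M=B]) (auto intro!: W1_le[OF _ _ _ _ Bd] Ph_prob Pt_prob sets_Ph sets_Pt)
      qed
    qed
    finally show "\<bar>a \<beta> - b \<beta>\<bar> \<le> lipconst f * (SUP \<beta>\<in>{0..1}. W1 MX (Ph (\<lambda>x. \<beta> * f x)) (Pt \<beta>))" .
  qed
  interpret \<Omega>: prob_space \<Omega> unfolding \<Omega>_def by (rule sampleN_prob)
  define \<epsilon> where "\<epsilon> = 2 * S * sqrt (ln (2 / \<delta>) / (2 * real N))"
  define T where "T = {\<omega> \<in> space \<Omega>. \<bar>Lest N f \<omega> - Lh f\<bar> \<le> \<bar>Lh f - E\<bar> + \<epsilon>}"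
  have Tm: "T \<in> sets \<Omega>"
  proof -
    have [measurable]: "Lest N f \<in> borel_measurable \<Omega>" unfolding \<Omega>_def by (rule Lest_meas)
    show ?thesis unfolding T_def by measurable
  qed
  have E2: "E = (\<integral>z. f (snd z) \<partial>pairlaw Pt)" unfolding E_def \<Omega>_def by (rule int_Lest[OF N_pos])
  have part1: "measure \<Omega> T \<ge> 1 - \<delta>"
  proof (cases "\<delta> < 1 \<and> S > 0")
    case False
    show ?thesis
    proof (cases "\<delta> \<ge> 1")
      case True
      then show ?thesis using measure_nonneg[of \<Omega> T] by linarith
    next
      case False2: False
      with False have S00: "S = 0" using S0 by auto
      have L0: "Lest N f \<omega> = 0" if "\<omega> \<in> space \<Omega>" for \<omega>
      proof -
        have "f (snd (\<omega> i)) = 0" if "i < N" for i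
          using X_bnd[of \<omega> N i] \<open>\<omega> \<in> space \<Omega>\<close> that S00 by (simp add: \<Omega>_def)
        then show ?thesis by (simp add: Lest_def)
      qed
      have "E = 0" unfolding E_def by (simp add: L0 cong: Bochner_Integration.integral_cong)
      then have "T = space \<Omega>" unfolding T_def \<epsilon>_def using L0 S00 by auto
      then show ?thesis using delta_pos by (simp add: \<Omega>.prob_space)
    qed
  next
    case True
    then have d1: "\<delta> < 1" and Spos: "S > 0" by auto
    have e0: "\<epsilon> \<ge> 0"
    proof -
      have "ln (2 / \<delta>) > 0" using d1 delta_pos by (intro ln_gt_zero) (simp add: field_simps) 
      then show ?thesis unfolding \<epsilon>_def using Spos N_pos by simp
    qed
    define B where "B = {\<omega> \<in> space \<Omega>. \<bar>Lest N f \<omega> - E\<bar> \<ge> \<epsilon>}"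
    have Bm: "B \<in> sets \<Omega>"
    proof -
      have [measurable]: "Lest N f \<in> borel_measurable \<Omega>" unfolding \<Omega>_def by (rule Lest_meas)
      show ?thesis unfolding B_def by measurable
    qed
    have hB: "measure \<Omega> B \<le> 2 * exp (-2 * real N * \<epsilon>\<^sup>2 / (2 * S)\<^sup>2)"
      unfolding B_def \<Omega>_def E2 by (rule hoeff[OF N_pos Spos e0])
    have "2 * exp (-2 * real N * \<epsilon>\<^sup>2 / (2 * S)\<^sup>2) = \<delta>"
    proof -
      have lpos: "ln (2 / \<delta>) > 0" using d1 delta_pos by (intro ln_gt_zero) (simp add: field_simps)
      have "\<epsilon>\<^sup>2 = (2 * S)\<^sup>2 * (ln (2 / \<delta>) / (2 * real N))"
        unfolding \<epsilon>_def using lpos N_pos by (simp add: power_mult_distrib)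
      then have "-2 * real N * \<epsilon>\<^sup>2 / (2 * S)\<^sup>2 = - ln (2 / \<delta>)"
        using Spos N_pos by (simp add: field_simps)
      then show ?thesis using delta_pos by (simp add: exp_minus exp_ln)
    qed
    with hB have hB': "measure \<Omega> B \<le> \<delta>" by simp
    have sub: "space \<Omega> - B \<subseteq> T"
    proof
      fix \<omega> assume "\<omega> \<in> space \<Omega> - B"
      then have w: "\<omega> \<in> space \<Omega>" "\<bar>Lest N f \<omega> - E\<bar> < \<epsilon>" unfolding B_def by auto
      have "\<bar>Lest N f \<omega> - Lh f\<bar> \<le> \<bar>Lest N f \<omega> - E\<bar> + \<bar>Lh f - E\<bar>" by linarith
      then show "\<omega> \<in> T" unfolding T_def using w by auto
    qed
    have "measure \<Omega> (space \<Omega> - B) = 1 - measure \<Omega> B" by (rule \<Omega>.prob_compl[OF Bm])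
    moreover have "measure \<Omega> (space \<Omega> - B) \<le> measure \<Omega> T"
      by (rule \<Omega>.finite_measure_mono[OF sub Tm])
    ultimately show ?thesis using hB' by linarith
  qed
  show ?thesis
    using part1 part2 part3 unfolding T_def \<Omega>_def E_def \<epsilon>_def S_def by blast
qed

end
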